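(* Let $N\ge 1$, let $V$, $\Delta$, $\mathcal F$, $T_v$, $\mathcal W$, $s_0$, $\{x_1,\dots,x_N\}$, $\mathcal H_\Omega$ and $\mathcal H_{i_1\dots i_n}$ be as in the context. Then: (i) The subspaces $\mathcal H_\Omega$ and $\mathcal H_{i_1\dots i_n}$ ($n\ge1$, $i_1,\dots,i_n\in\{1,\dots,N\}$, $i_n\neq 1$) are mutually orthogonal, $$\mathcal H_\Omega\oplus\bigoplus_{n\ge1,\ i_1,\dots,i_n\in\{1,\dots,N\},\ i_n\neq1}\mathcal H_{i_1\dots i_n}=\mathcal F,$$ and each of them is a cyclic subspace for the operator $\mathcal W\Delta\mathcal W^*$. (ii) Let $S$ be the unilateral shift on $l^2(\mathbb{N}_0)$, $S(y_0,y_1,y_2,\dots)=(0,y_0,y_1,\dots)$, let $\operatorname{Re}S=\frac{S+S^*}{2}$ and let $P_{\delta_0}$ be the orthogonal projection onto $\delta_0$. The restriction of $\mathcal W\Delta\mathcal W^*$ to $\mathcal H_\Omega$ is unitarily equivalent to $D_\Omega:=(N+1)I-2\sqrt N\operatorname{Re}S-P_{\delta_0}$ on $l^2(\mathbb{N}_0)$, and for all $n\ge1$ and $i_1,\dots,i_n\in\{1,\dots,N\}$ with $i_n\neq1$, the restriction of $\mathcal W\Delta\mathcal W^*$ to $\mathcal H_{i_1\dots i_n}$ is unitarily equivalent to $D:=(N+1)I-2\sqrt N\operatorname{Re}S$ on $l^2(\mathbb{N}_0)$.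
   Context: $V$ is the set of finite words over $\{1,\dots,N\}$ including the empty word $\emptyset$; the $N$-ary tree has edges exactly the pairs $\{\omega,\omega i\}$ ($\omega\in V$, $i\in\{1,\dots,N\}$, $\omega i$ = $\omega$ with letter $i$ appended). $\Delta$ is the graph Laplacian $(\Delta v)(x)=\sum_{y\sim x}(v(x)-v(y))$ on $l^2(V)$ (bounded selfadjoint). Let $H=\mathbb{C}^N$ with orthonormal basis $e_1,\dots,e_N$, and let $\mathcal F=\mathbb{C}\Omega\oplus H\oplus H^{\otimes 2}\oplus\cdots$ be the full Fock space (Hilbert direct sum, $\Omega$ a unit vector). For $v\in H$ let $T_v$ on $\mathcal F$ be $T_v\Omega=v$, $T_v\xi=\xi\otimes v$ for $\xi\in H^{\otimes n}$, $n\ge1$. Let $\mathcal W:l^2(V)\to\mathcal F$ be the unitary with $\mathcal W\delta_\emptyset=\Omega$ and $\mathcal W\delta_{\omega_1\dots\omega_n}=e_{\omega_1}\otimes\cdots\otimes e_{\omega_n}$. Let $s_0=N^{-1/2}\sum_{i=1}^Ne_i$ and let $\{x_1,\dots,x_N\}$ be an orthonormal basis of $H$ with $x_1=s_0$. Define $\mathcal H_\Omega=\overline{\operatorname{span}}\{\Omega,\ s_0^{\otimes p}: p\ge1\}$ and, for $n\ge1$, $i_1,\dots,i_n\in\{1,\dots,N\}$ with $i_n\neq1$, $\mathcal H_{i_1\dots i_n}=\overline{\operatorname{span}}\{x_{i_1}\otimes\cdots\otimes x_{i_n}\otimes s_0^{\otimes p}: p\ge0\}$. *)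

theory Defs
  imports "HOL-Analysis.Analysis"
begin

definition ell2 :: "'a set \<Rightarrow> ('a \<Rightarrow> complex) set" where
  "ell2 A = {f. (\<forall>x. x \<notin> A \<longrightarrow> f x = 0) \<and> (\<lambda>x. (cmod (f x))^2) summable_on A}"

definition l2inner :: "'a set \<Rightarrow> ('a \<Rightarrow> complex) \<Rightarrow> ('a \<Rightarrow> complex) \<Rightarrow> complex" where
  "l2inner A f g = infsum (\<lambda>x. cnj (f x) * g x) A"

definition l2norm :: "'a set \<Rightarrow> ('a \<Rightarrow> complex) \<Rightarrow> real" where
  "l2norm A f = sqrt (infsum (\<lambda>x. (cmod (f x))^2) A)"

definition cspan :: "('a \<Rightarrow> complex) set \<Rightarrow> ('a \<Rightarrow> complex) set" where
  "cspan S = {f. \<exists>F c. finite F \<and> F \<subseteq> S \<and> f = (\<lambda>x. \<Sum>v\<in>F. c v * v x)}"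

definition closed_span :: "'a set \<Rightarrow> ('a \<Rightarrow> complex) set \<Rightarrow> ('a \<Rightarrow> complex) set" where
  "closed_span A S = {f \<in> ell2 A. \<forall>e>0. \<exists>g\<in>cspan S. l2norm A (\<lambda>x. f x - g x) < e}"

definition cyclic_subspace ::
  "'a set \<Rightarrow> (('a \<Rightarrow> complex) \<Rightarrow> ('a \<Rightarrow> complex)) \<Rightarrow> ('a \<Rightarrow> complex) set \<Rightarrow> bool" where
  "cyclic_subspace A T M \<longleftrightarrow> (\<exists>\<xi>\<in>M. M = closed_span A {(T ^^ k) \<xi> | k. True})"

definition unitarily_equivalent ::
  "'a set \<Rightarrow> (('a \<Rightarrow> complex) \<Rightarrow> ('a \<Rightarrow> complex)) \<Rightarrow> ('a \<Rightarrow> complex) set \<Rightarrow>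
   'b set \<Rightarrow> (('b \<Rightarrow> complex) \<Rightarrow> ('b \<Rightarrow> complex)) \<Rightarrow> ('b \<Rightarrow> complex) set \<Rightarrow> bool" where
  "unitarily_equivalent A T M B R K \<longleftrightarrow>
     (\<forall>f\<in>M. T f \<in> M) \<and>
     (\<exists>U. bij_betw U M K \<and>
        (\<forall>f\<in>M. \<forall>g\<in>M. \<forall>c. U (\<lambda>x. f x + c * g x) = (\<lambda>y. U f y + c * U g y)) \<and>
        (\<forall>f\<in>M. \<forall>g\<in>M. l2inner B (U f) (U g) = l2inner A f g) \<and>
        (\<forall>f\<in>M. U (T f) = R (U f)))"

definition words :: "nat \<Rightarrow> nat list set" where
  "words N = {w. set w \<subseteq> {1..N}}"

text \<open>Graph Laplacian: neighbours of w are the children w@[i] and (if w is nonempty) the parent.\<close>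
definition lap :: "nat \<Rightarrow> (nat list \<Rightarrow> complex) \<Rightarrow> (nat list \<Rightarrow> complex)" where
  "lap N v w = (if w \<in> words N then
      (of_nat N + (if w = [] then 0 else 1)) * v w - (\<Sum>i=1..N. v (w @ [i]))
      - (if w = [] then 0 else v (butlast w))
    else 0)"

text \<open>Full Fock space over C^N realized in its standard basis: e_{w1}\<otimes>...\<otimes>e_{wn} is identified with
  the word w1...wn (this is exactly the unitary W, which thus becomes the identity).
  Vectors of H = C^N are functions nat \<Rightarrow> complex read on {1..N}.
  Elementary tensor v_1 \<otimes> ... \<otimes> v_m (m = 0 gives the vacuum \<Omega>):\<close>
definition tensor :: "nat \<Rightarrow> (nat \<Rightarrow> complex) list \<Rightarrow> (nat list \<Rightarrow> complex)" where
  "tensor N vs = (\<lambda>w. if length w = length vs \<and> set w \<subseteq> {1..N}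
                      then (\<Prod>k<length w. (vs ! k) (w ! k)) else 0)"

definition s0 :: "nat \<Rightarrow> (nat \<Rightarrow> complex)" where
  "s0 N = (\<lambda>k. if k \<in> {1..N} then complex_of_real (1 / sqrt (real N)) else 0)"

definition H_Omega :: "nat \<Rightarrow> (nat list \<Rightarrow> complex) set" where
  "H_Omega N = closed_span (words N)
     ({tensor N []} \<union> {tensor N (replicate p (s0 N)) | p. p \<ge> 1})"

definition H_idx :: "nat \<Rightarrow> (nat \<Rightarrow> nat \<Rightarrow> complex) \<Rightarrow> nat list \<Rightarrow> (nat list \<Rightarrow> complex) set" where
  "H_idx N x I = closed_span (words N) {tensor N (map x I @ replicate p (s0 N)) | p. True}"

definition Idx :: "nat \<Rightarrow> nat list set" where
  "Idx N = {I. I \<noteq> [] \<and> set I \<subseteq> {1..N} \<and> last I \<noteq> 1}"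

definition shift :: "(nat \<Rightarrow> complex) \<Rightarrow> (nat \<Rightarrow> complex)" where
  "shift y k = (if k = 0 then 0 else y (k - 1))"

definition shift_adj :: "(nat \<Rightarrow> complex) \<Rightarrow> (nat \<Rightarrow> complex)" where
  "shift_adj y k = y (Suc k)"

definition ReS :: "(nat \<Rightarrow> complex) \<Rightarrow> (nat \<Rightarrow> complex)" where
  "ReS y k = (shift y k + shift_adj y k) / 2"

definition proj0 :: "(nat \<Rightarrow> complex) \<Rightarrow> (nat \<Rightarrow> complex)" where
  "proj0 y k = (if k = 0 then y 0 else 0)"

definition D_Omega :: "nat \<Rightarrow> (nat \<Rightarrow> complex) \<Rightarrow> (nat \<Rightarrow> complex)" where
  "D_Omega N y k = of_nat (N + 1) * y k - 2 * complex_of_real (sqrt (real N)) * ReS y k - proj0 y k"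

definition D_op :: "nat \<Rightarrow> (nat \<Rightarrow> complex) \<Rightarrow> (nat \<Rightarrow> complex)" where
  "D_op N y k = of_nat (N + 1) * y k - 2 * complex_of_real (sqrt (real N)) * ReS y k"

end

theory Submission
  imports Defs "HOL-Library.Function_Algebras" "Jordan_Normal_Form.Determinant"
begin

lemma rows_orth:
  fixes x :: "nat \<Rightarrow> nat \<Rightarrow> complex"
  assumes "\<forall>i\<in>{1..N}. \<forall>j\<in>{1..N}. (\<Sum>k=1..N. cnj (x i k) * x j k) = (if i = j then 1 else 0)"
  and "a \<in> {1..N}" "a' \<in> {1..N}"
  shows "(\<Sum>i=1..N. x i a * cnj (x i a')) = (if a = a' then 1 else 0)"
proof -
  define A where "A = mat N N (\<lambda>(i,k). cnj (x (i+1) (k+1)))"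
  define B where "B = mat N N (\<lambda>(k,j). x (j+1) (k+1))"
  have A: "A \<in> carrier_mat N N" and B: "B \<in> carrier_mat N N" by (auto simp: A_def B_def)
  have "A * B = 1\<^sub>m N"
  proof (rule eq_matI)
    fix i j assume ij: "i < dim_row (1\<^sub>m N)" "j < dim_col (1\<^sub>m N)"
    have "(A * B) $$ (i, j) = (\<Sum>k<N. cnj (x (i+1) (k+1)) * x (j+1) (k+1))"
      using ij A B by (simp add: A_def B_def scalar_prod_def times_mat_def atLeast0LessThan)
    also have "\<dots> = (\<Sum>k=1..N. cnj (x (i+1) k) * x (j+1) k)"
      by (rule sum.reindex_bij_witness[of _ "\<lambda>k. k - 1" "\<lambda>k. k + 1"]) auto
    also have "\<dots> = 1\<^sub>m N $$ (i, j)" using ij assms(1) by auto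
    finally show "(A * B) $$ (i, j) = 1\<^sub>m N $$ (i, j)" .
  qed (auto simp: A_def B_def)
  hence BA: "B * A = 1\<^sub>m N" using mat_mult_left_right_inverse[OF A B] by blast
  have lt: "a - 1 < N" "a' - 1 < N" "a - 1 + 1 = a" "a' - 1 + 1 = a'" using assms(2,3) by auto
  have "(B * A) $$ (a - 1, a' - 1) = (\<Sum>i<N. x (i+1) a * cnj (x (i+1) a'))"
    using lt A B unfolding A_def B_def by (simp add: scalar_prod_def atLeast0LessThan)
  also have "\<dots> = (\<Sum>i=1..N. x i a * cnj (x i a'))"
    by (rule sum.reindex_bij_witness[of _ "\<lambda>k. k - 1" "\<lambda>k. k + 1"]) auto
  finally have "(if a - 1 = a' - 1 then 1 else 0) = (\<Sum>i=1..N. x i a * cnj (x i a'))"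
    using BA lt by auto
  moreover have "(a - 1 = a' - 1) = (a = a')" using assms(2,3) by auto
  ultimately show ?thesis by simp
qed



definition L :: "nat \<Rightarrow> nat \<Rightarrow> nat list set" where
  "L N n = {w. length w = n \<and> set w \<subseteq> {1..N}}"

lemma finite_L: "finite (L N n)"
proof -
  have "finite {xs. set xs \<subseteq> {1..N} \<and> length xs = n}"
    by (rule finite_lists_length_eq) simp
  thus ?thesis unfolding L_def by (simp add: conj_commute)
qed

lemma words_levels: "words N = (\<Union>n. L N n)"
  by (auto simp: words_def L_def)

lemma L_disj: "disjoint_family (L N)"
  unfolding disjoint_family_on_def L_def by auto

lemma L_sub: "L N n \<subseteq> words N"
  by (auto simp: words_def L_def)

lemma has_sum_levels:
  fixes f :: "nat list \<Rightarrow> 'c::{banach,uniform_topological_group_add}"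
  assumes "(f has_sum s) (words N)"
  shows "((\<lambda>n. sum f (L N n)) has_sum s) UNIV"
proof -
  have "((\<lambda>(n,w). f w) has_sum s) (Sigma UNIV (L N))"
    using assms
    by (subst has_sum_reindex_bij_witness[where i="\<lambda>w. (length w, w)" and j="\<lambda>(n,w). w"
          and S="Sigma UNIV (L N)" and T="words N" and g="\<lambda>(n,w). f w" and h=f and s'=s])
       (auto simp: L_def words_def subset_iff)
  from has_sum_Sigma'[OF this, of "\<lambda>n. sum f (L N n)"] show ?thesis
    by (simp add: finite_L has_sum_finiteI)
qed

lemma summable_levels_nonneg:
  fixes f :: "nat list \<Rightarrow> real"
  assumes "\<And>w. f w \<ge> 0" "(\<lambda>n. sum f (L N n)) summable_on UNIV"
  shows "f summable_on words N"
  unfolding words_levels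
  by (rule summable_on_UnionI[OF _ assms(2)]) (auto intro: has_sum_finiteI finite_L assms(1) L_disj)

lemma ell2_vanish: "f \<in> ell2 A \<Longrightarrow> x \<notin> A \<Longrightarrow> f x = 0"
  by (auto simp: ell2_def)

lemma ell2_summ: "f \<in> ell2 A \<Longrightarrow> (\<lambda>x. (cmod (f x))^2) summable_on A"
  by (auto simp: ell2_def)

lemma ell2I: "(\<And>x. x \<notin> A \<Longrightarrow> f x = 0) \<Longrightarrow> (\<lambda>x. (cmod (f x))^2) summable_on A \<Longrightarrow> f \<in> ell2 A"
  by (auto simp: ell2_def)

lemma sq_add_bound: "(cmod (a + b))^2 \<le> 2 * (cmod a)^2 + 2 * (cmod b)^2"
proof -
  have "cmod (a + b) \<le> cmod a + cmod b" by (rule norm_triangle_ineq)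
  hence "(cmod (a + b))^2 \<le> (cmod a + cmod b)^2" by (simp add: power_mono)
  also have "\<dots> \<le> 2 * (cmod a)^2 + 2 * (cmod b)^2"
    by (smt (verit) zero_le_power2 power2_diff power2_sum)
  finally show ?thesis .
qed

lemma ell2_add: "f \<in> ell2 A \<Longrightarrow> g \<in> ell2 A \<Longrightarrow> (\<lambda>x. f x + g x) \<in> ell2 A"
proof (rule ell2I)
  assume f: "f \<in> ell2 A" and g: "g \<in> ell2 A"
  show "x \<notin> A \<Longrightarrow> f x + g x = 0" for x using f g by (simp add: ell2_vanish)
  have "(\<lambda>x. 2 * (cmod (f x))^2 + 2 * (cmod (g x))^2) summable_on A"
    by (intro summable_on_add summable_on_cmult_right ell2_summ f g)
  thus "(\<lambda>x. (cmod (f x + g x))^2) summable_on A"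
    by (rule summable_on_comparison_test) (auto simp: sq_add_bound)
qed

lemma ell2_scale: "f \<in> ell2 A \<Longrightarrow> (\<lambda>x. c * f x) \<in> ell2 A"
proof (rule ell2I)
  assume f: "f \<in> ell2 A"
  show "x \<notin> A \<Longrightarrow> c * f x = 0" for x using f by (simp add: ell2_vanish)
  have "(\<lambda>x. (cmod c)^2 * (cmod (f x))^2) summable_on A"
    by (intro summable_on_cmult_right ell2_summ f)
  thus "(\<lambda>x. (cmod (c * f x))^2) summable_on A"
    by (simp add: norm_mult power_mult_distrib)
qed

lemma ell2_zero: "(\<lambda>x. 0) \<in> ell2 A"
  by (rule ell2I) auto

lemma ell2_diff: "f \<in> ell2 A \<Longrightarrow> g \<in> ell2 A \<Longrightarrow> (\<lambda>x. f x - g x) \<in> ell2 A"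
  using ell2_add[of f A "\<lambda>x. (-1) * g x"] ell2_scale[of g A "-1"] by simp

definition sc :: "complex \<Rightarrow> ('a \<Rightarrow> complex) \<Rightarrow> ('a \<Rightarrow> complex)" where
  "sc c f = (\<lambda>x. c * f x)"

interpretation fm: Modules.module sc
  by unfold_locales (auto simp: sc_def fun_eq_iff algebra_simps)

lemma fun_sum_apply: "(sum g A) x = (\<Sum>a\<in>A. g a x)"
  by (induction A rule: infinite_finite_induct) auto

lemma cspan_eq: "cspan S = fm.span S"
  unfolding cspan_def fm.span_explicit
  by (auto simp: fun_sum_apply sc_def fun_eq_iff)

lemma ell2_subspace: "fm.subspace (ell2 A)"
  unfolding fm.subspace_def
  using ell2_add ell2_zero ell2_scale by (auto simp: sc_def plus_fun_def zero_fun_def)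

lemma cspan_ell2: "S \<subseteq> ell2 A \<Longrightarrow> cspan S \<subseteq> ell2 A"
  unfolding cspan_eq using ell2_subspace fm.span_minimal by blast

lemma l2norm_sq: "f \<in> ell2 A \<Longrightarrow> (l2norm A f)^2 = infsum (\<lambda>x. (cmod (f x))^2) A"
proof -
  have "0 \<le> infsum (\<lambda>x. (cmod (f x))^2) A" by (rule infsum_nonneg) simp
  thus ?thesis unfolding l2norm_def by simp
qed

lemma l2norm_nonneg: "l2norm A f \<ge> 0"
proof -
  have "0 \<le> infsum (\<lambda>x. (cmod (f x))^2) A" by (rule infsum_nonneg) simp
  thus ?thesis unfolding l2norm_def by simp
qed

lemma l2norm_finite:
  assumes "f \<in> ell2 A" "finite B" "B \<subseteq> A"
  shows "(\<Sum>x\<in>B. (cmod (f x))^2) \<le> (l2norm A f)^2"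
  unfolding l2norm_sq[OF assms(1)]
  by (rule finite_sum_le_infsum) (use assms ell2_summ in auto)

lemma l2norm_point:
  assumes "f \<in> ell2 A" "x \<in> A"
  shows "cmod (f x) \<le> l2norm A f"
proof -
  have "(cmod (f x))^2 \<le> (l2norm A f)^2"
    using l2norm_finite[OF assms(1), of "{x}"] assms(2) by simp
  thus ?thesis using l2norm_nonneg by (meson abs_le_square_iff abs_norm_cancel dual_order.trans abs_ge_self power2_le_imp_le)
qed

lemma closed_span_sub: "closed_span A S \<subseteq> ell2 A"
  unfolding closed_span_def by auto

lemma closed_span_cong: "cspan S = cspan T \<Longrightarrow> closed_span A S = closed_span A T"
  unfolding closed_span_def by simp

lemma closed_span_gen:
  assumes "S \<subseteq> ell2 A" "s \<in> S"
  shows "s \<in> closed_span A S"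
  unfolding closed_span_def
proof (intro CollectI conjI allI impI)
  show "s \<in> ell2 A" using assms by auto
  fix e :: real assume "e > 0"
  have "s \<in> cspan S" unfolding cspan_eq using assms(2) fm.span_base by blast
  moreover have "l2norm A (\<lambda>x. s x - s x) = 0" by (simp add: l2norm_def)
  ultimately show "\<exists>g\<in>cspan S. l2norm A (\<lambda>x. s x - g x) < e" using \<open>e > 0\<close> by (intro bexI[of _ s]) auto
qed




lemma L_Suc: "L N (Suc n) = (\<lambda>(a,j). a # j) ` ({1..N} \<times> L N n)"
proof (rule Set.set_eqI)
  fix w show "w \<in> L N (Suc n) \<longleftrightarrow> w \<in> (\<lambda>(a,j). a # j) ` ({1..N} \<times> L N n)"
    by (cases w) (auto simp: L_def)
qed

lemma L_0: "L N 0 = {[]}" by (auto simp: L_def)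

lemma prodsum:
  fixes F :: "nat \<Rightarrow> nat \<Rightarrow> 'a::comm_semiring_1"
  shows "(\<Sum>j\<in>L N n. \<Prod>k<n. F k (j ! k)) = (\<Prod>k<n. \<Sum>a\<in>{1..N}. F k a)"
proof (induction n arbitrary: F)
  case 0 thus ?case by (simp add: L_0)
next
  case (Suc n)
  have inj: "inj_on (\<lambda>(a,j). a # j) ({1..N} \<times> L N n)" by (auto simp: inj_on_def)
  have "(\<Sum>j\<in>L N (Suc n). \<Prod>k<Suc n. F k (j ! k))
      = (\<Sum>(a,j)\<in>{1..N} \<times> L N n. \<Prod>k<Suc n. F k ((a # j) ! k))"
    unfolding L_Suc by (subst sum.reindex[OF inj]) (simp add: case_prod_unfold)
  also have "\<dots> = (\<Sum>(a,j)\<in>{1..N} \<times> L N n. F 0 a * (\<Prod>k<n. F (Suc k) (j ! k)))"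
    by (rule sum.cong) (auto simp del: prod.lessThan_Suc simp add: prod.lessThan_Suc_shift)
  also have "\<dots> = (\<Sum>a\<in>{1..N}. \<Sum>j\<in>L N n. F 0 a * (\<Prod>k<n. F (Suc k) (j ! k)))"
    by (simp add: sum.cartesian_product)
  also have "\<dots> = (\<Sum>a\<in>{1..N}. F 0 a * (\<Prod>k<n. \<Sum>b\<in>{1..N}. F (Suc k) b))"
  proof (rule sum.cong[OF refl])
    fix a
    have IH: "(\<Sum>j\<in>L N n. \<Prod>k<n. F (Suc k) (j!k)) = (\<Prod>k<n. \<Sum>b\<in>{1..N}. F (Suc k) b)"
      using Suc.IH[of "\<lambda>k. F (Suc k)"] .
    show "(\<Sum>j\<in>L N n. F 0 a * (\<Prod>k<n. F (Suc k) (j ! k))) = F 0 a * (\<Prod>k<n. \<Sum>b\<in>{1..N}. F (Suc k) b)"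
      unfolding IH[symmetric] by (rule sum_distrib_left[symmetric])
  qed
  also have "\<dots> = (\<Prod>k<Suc n. \<Sum>a\<in>{1..N}. F k a)"
    by (simp del: prod.lessThan_Suc add: prod.lessThan_Suc_shift sum_distrib_right)
  finally show ?case .
qed

lemma tensor_on_L: "w \<in> L N n \<Longrightarrow> length vs = n \<Longrightarrow> tensor N vs w = (\<Prod>k<n. (vs ! k) (w ! k))"
  by (auto simp: tensor_def L_def)

lemma tensor_off: "length w \<noteq> length vs \<or> \<not> set w \<subseteq> {1..N} \<Longrightarrow> tensor N vs w = 0"
  by (auto simp: tensor_def)

lemma tensor_inner:
  assumes "length vs = n" "length vs' = n"
  shows "(\<Sum>w\<in>L N n. cnj (tensor N vs w) * tensor N vs' w)
       = (\<Prod>k<n. \<Sum>a\<in>{1..N}. cnj ((vs ! k) a) * (vs' ! k) a)"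
proof -
  have "(\<Sum>w\<in>L N n. cnj (tensor N vs w) * tensor N vs' w)
      = (\<Sum>w\<in>L N n. \<Prod>k<n. cnj ((vs ! k) (w ! k)) * (vs' ! k) (w ! k))"
    by (rule sum.cong) (auto simp: tensor_on_L assms prod.distrib)
  also have "\<dots> = (\<Prod>k<n. \<Sum>a\<in>{1..N}. cnj ((vs ! k) a) * (vs' ! k) a)"
    by (rule prodsum)
  finally show ?thesis .
qed

lemma tensor_cong:
  assumes "length vs = length vs'" "\<And>k a. k < length vs \<Longrightarrow> a \<in> {1..N} \<Longrightarrow> (vs ! k) a = (vs' ! k) a"
  shows "tensor N vs = tensor N vs'"
proof (rule ext)
  fix w
  show "tensor N vs w = tensor N vs' w"
  proof (cases "length w = length vs \<and> set w \<subseteq> {1..N}")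
    case True
    hence "(vs ! k) (w ! k) = (vs' ! k) (w ! k)" if "k < length w" for k
      using assms(2)[of k "w ! k"] that by (auto simp: subset_iff)
    thus ?thesis using True assms(1) unfolding tensor_def by (auto intro: prod.cong)
  qed (use assms(1) in \<open>auto simp: tensor_def\<close>)
qed

definition bv :: "nat \<Rightarrow> (nat \<Rightarrow> nat \<Rightarrow> complex) \<Rightarrow> nat list \<Rightarrow> nat list \<Rightarrow> complex" where
  "bv N x j = tensor N (map x j)"

lemma bv_off: "w \<notin> L N (length j) \<Longrightarrow> bv N x j w = 0"
  by (auto simp: bv_def tensor_def L_def)

lemma bv_snoc: "bv N x (j @ [a]) (w @ [i]) = bv N x j w * (if i \<in> {1..N} then x a i else 0)"
  by (auto simp: bv_def tensor_def nth_append lessThan_Suc)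

lemma bv_Nil: "bv N x [] w = (if w = [] then 1 else 0)"
  by (auto simp: bv_def tensor_def)

lemma bv_Nil_arg: "bv N x j [] = (if j = [] then 1 else 0)"
  by (auto simp: bv_def tensor_def)

locale tree =
  fixes N :: nat and x :: "nat \<Rightarrow> nat \<Rightarrow> complex"
  assumes N1: "N \<ge> 1"
    and orth: "\<forall>i\<in>{1..N}. \<forall>j\<in>{1..N}. (\<Sum>k=1..N. cnj (x i k) * x j k) = (if i = j then 1 else 0)"
    and x1: "\<forall>k\<in>{1..N}. x 1 k = s0 N k"
begin

lemma rows: "a \<in> {1..N} \<Longrightarrow> a' \<in> {1..N} \<Longrightarrow> (\<Sum>i=1..N. x i a * cnj (x i a')) = (if a = a' then 1 else 0)"
  by (rule rows_orth[OF orth])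

lemma bv_orth:
  assumes "j \<in> L N n" "j' \<in> L N n"
  shows "(\<Sum>w\<in>L N n. cnj (bv N x j w) * bv N x j' w) = (if j = j' then 1 else 0)"
proof -
  have lens: "length j = n" "length j' = n" using assms by (auto simp: L_def)
  have "(\<Sum>w\<in>L N n. cnj (bv N x j w) * bv N x j' w) = (\<Prod>k<n. if j ! k = j' ! k then 1 else 0)"
    unfolding bv_def
  proof (subst tensor_inner, (simp add: lens)+, rule prod.cong)
    fix k assume "k \<in> {..<n}"
    hence "j ! k \<in> {1..N}" "j' ! k \<in> {1..N}" using assms lens by (auto simp: L_def subset_iff)
    thus "(\<Sum>a = Suc 0..N. cnj (x (j ! k) a) * x (j' ! k) a) = (if j ! k = j' ! k then 1 else 0)"
      using orth by auto
  qed simp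
  also have "\<dots> = (if j = j' then 1 else 0)"
  proof (cases "j = j'")
    case False
    then obtain k where "k < n" "j ! k \<noteq> j' ! k" using lens nth_equalityI by metis
    thus ?thesis using False by (auto intro!: prod_zero)
  qed simp
  finally show ?thesis .
qed

lemma bv_rows:
  assumes "w \<in> L N n" "w' \<in> L N n"
  shows "(\<Sum>j\<in>L N n. cnj (bv N x j w) * bv N x j w') = (if w = w' then 1 else 0)"
proof -
  have lens: "length w = n" "length w' = n" using assms by (auto simp: L_def)
  have "(\<Sum>j\<in>L N n. cnj (bv N x j w) * bv N x j w')
      = (\<Sum>j\<in>L N n. \<Prod>k<n. cnj (x (j ! k) (w ! k)) * x (j ! k) (w' ! k))"
  proof (rule sum.cong)
    fix j assume "j \<in> L N n"
    hence lj: "length (map x j) = n" by (simp add: L_def)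
    show "cnj (bv N x j w) * bv N x j w' = (\<Prod>k<n. cnj (x (j ! k) (w ! k)) * x (j ! k) (w' ! k))"
      unfolding bv_def tensor_on_L[OF assms(1) lj] tensor_on_L[OF assms(2) lj] prod.distrib
      using lj by simp
  qed simp
  also have "\<dots> = (\<Prod>k<n. \<Sum>a\<in>{1..N}. cnj (x a (w ! k)) * x a (w' ! k))"
    by (rule prodsum)
  also have "\<dots> = (\<Prod>k<n. if w ! k = w' ! k then 1 else 0)"
  proof (rule prod.cong)
    fix k assume "k \<in> {..<n}"
    hence in1: "w ! k \<in> {1..N}" "w' ! k \<in> {1..N}" using assms lens by (auto simp: L_def subset_iff)
    have "(\<Sum>a\<in>{1..N}. cnj (x a (w ! k)) * x a (w' ! k)) = cnj (\<Sum>a\<in>{1..N}. x a (w ! k) * cnj (x a (w' ! k)))"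
      by (simp add: mult.commute)
    also have "\<dots> = (if w ! k = w' ! k then 1 else 0)" using rows[OF in1] by simp
    finally show "(\<Sum>a\<in>{1..N}. cnj (x a (w ! k)) * x a (w' ! k)) = (if w ! k = w' ! k then 1 else 0)" .
  qed simp
  also have "\<dots> = (if w = w' then 1 else 0)"
  proof (cases "w = w'")
    case False
    then obtain k where "k < n" "w ! k \<noteq> w' ! k" using lens nth_equalityI by metis
    thus ?thesis using False by (auto intro!: prod_zero)
  qed simp
  finally show ?thesis .
qed

end



definition E :: "nat \<Rightarrow> (nat \<Rightarrow> nat \<Rightarrow> complex) \<Rightarrow> nat list \<Rightarrow> (nat \<Rightarrow> complex) \<Rightarrow> nat list \<Rightarrow> complex" where
  "E N x b c w = (if length b \<le> length w
     then c (length w - length b) * bv N x (b @ replicate (length w - length b) 1) w else 0)"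

definition Uc :: "nat \<Rightarrow> (nat \<Rightarrow> nat \<Rightarrow> complex) \<Rightarrow> nat list \<Rightarrow> (nat list \<Rightarrow> complex) \<Rightarrow> nat \<Rightarrow> complex" where
  "Uc N x b f p = (\<Sum>w\<in>L N (length b + p). cnj (bv N x (b @ replicate p 1) w) * f w)"

definition dl :: "nat \<Rightarrow> nat \<Rightarrow> complex" where
  "dl p q = (if q = p then 1 else 0)"

definition gb :: "nat \<Rightarrow> nat list \<Rightarrow> bool" where
  "gb N b \<longleftrightarrow> set b \<subseteq> {1..N} \<and> (b = [] \<or> last b \<noteq> 1)"

definition strip :: "nat list \<Rightarrow> nat list" where
  "strip l = rev (dropWhile (\<lambda>a. a = 1) (rev l))"

lemma strip_append: "gb N b \<Longrightarrow> strip (b @ replicate p 1) = b"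
proof -
  assume g: "gb N b"
  have "dropWhile (\<lambda>a. a = 1) (rev b) = rev b"
  proof (cases b rule: rev_cases)
    case (snoc ys y) thus ?thesis using g by (auto simp: gb_def)
  qed simp
  thus ?thesis unfolding strip_def by (simp add: dropWhile_append)
qed

lemma block_inj: "gb N b \<Longrightarrow> gb N b' \<Longrightarrow> b @ replicate p 1 = b' @ replicate p' 1 \<Longrightarrow> b = b'"
  by (metis strip_append)

lemma strip_decomp: "strip j @ replicate (length j - length (strip j)) 1 = j"
proof -
  let ?t = "takeWhile (\<lambda>a. a = 1) (rev j)" and ?d = "dropWhile (\<lambda>a. a = 1) (rev j)"
  have td: "?t @ ?d = rev j" by simp
  have t: "?t = replicate (length ?t) 1"
    by (rule replicate_length_same[symmetric]) (auto dest: set_takeWhileD)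
  have l: "length ?t + length ?d = length j"
    using arg_cong[OF td, of length] unfolding length_append length_rev .
  have len: "length j - length (strip j) = length ?t"
    using l by (simp add: strip_def)
  have "j = rev (?t @ ?d)" by (simp only: takeWhile_dropWhile_id rev_rev_ident)
  also have "\<dots> = rev ?d @ rev ?t" by (rule rev_append)
  also have "rev ?d = strip j" by (simp add: strip_def)
  also have "rev ?t = replicate (length ?t) (1::nat)" by (subst t) simp
  finally show ?thesis using len by simp
qed

lemma strip_gb: "set j \<subseteq> {1..N} \<Longrightarrow> gb N (strip j)"
proof -
  assume j: "set j \<subseteq> {1..N}"
  have "set (strip j) \<subseteq> set j" unfolding strip_def by (auto dest: set_dropWhileD)
  moreover have "strip j = [] \<or> last (strip j) \<noteq> 1"
  proof (cases "dropWhile (\<lambda>a. a = 1) (rev j) = []")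
    case False
    hence "hd (dropWhile (\<lambda>a. a = 1) (rev j)) \<noteq> 1" by (rule hd_dropWhile)
    thus ?thesis using False by (simp add: strip_def last_rev)
  qed (simp add: strip_def)
  ultimately show ?thesis using j by (auto simp: gb_def)
qed

lemma E_on_L: "length w = n \<Longrightarrow> length b \<le> n \<Longrightarrow>
   E N x b c w = c (n - length b) * bv N x (b @ replicate (n - length b) 1) w"
  by (simp add: E_def)

lemma E_low: "length w < length b \<Longrightarrow> E N x b c w = 0"
  by (simp add: E_def)

lemma E_off: "w \<notin> words N \<Longrightarrow> E N x b c w = 0"
  by (auto simp: E_def bv_off L_def words_def)

lemma E_dl: "E N x b (dl p) = bv N x (b @ replicate p 1)"
proof (rule ext)
  fix w
  show "E N x b (dl p) w = bv N x (b @ replicate p 1) w"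
  proof (cases "length w = length b + p")
    case True thus ?thesis by (simp add: E_def dl_def)
  next
    case False
    hence "bv N x (b @ replicate p 1) w = 0" by (intro bv_off) (auto simp: L_def)
    thus ?thesis using False by (auto simp: E_def dl_def)
  qed
qed

lemma E_lin: "E N x b (\<lambda>p. c p + a * d p) = (\<lambda>w. E N x b c w + a * E N x b d w)"
  by (rule ext) (simp add: E_def algebra_simps)

lemma E_diff: "E N x b (\<lambda>p. c p - d p) = (\<lambda>w. E N x b c w - E N x b d w)"
  by (rule ext) (simp add: E_def algebra_simps)

lemma E_zero: "E N x b (\<lambda>p. 0) = (\<lambda>w. 0)"
  by (rule ext) (simp add: E_def)

lemma Uc_lin: "Uc N x b (\<lambda>w. f w + a * g w) = (\<lambda>p. Uc N x b f p + a * Uc N x b g p)"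
  by (rule ext) (simp add: Uc_def algebra_simps sum.distrib sum_distrib_left)

lemma Uc_diff: "Uc N x b (\<lambda>w. f w - g w) = (\<lambda>p. Uc N x b f p - Uc N x b g p)"
  by (rule ext) (simp add: Uc_def algebra_simps sum_subtractf)

lemma Uc_zero: "Uc N x b (\<lambda>w. 0) = (\<lambda>p. 0)"
  by (rule ext) (simp add: Uc_def)

lemma tensor_gen:
  assumes "\<forall>k\<in>{1..N}. x 1 k = s0 N k"
  shows "tensor N (map x b @ replicate p (s0 N)) = bv N x (b @ replicate p 1)"
  unfolding bv_def
  by (rule tensor_cong) (use assms in \<open>auto simp: nth_append\<close>)

lemma H_Omega_eq: "H_Omega N = H_idx N x []"
proof -
  let ?A = "{tensor N []} \<union> {tensor N (replicate p (s0 N)) | p. p \<ge> 1}"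
  let ?B = "{tensor N (map x [] @ replicate p (s0 N)) | p. True}"
  have "?A = ?B"
  proof (rule Set.set_eqI, rule iffI)
    fix v assume "v \<in> ?A"
    hence "v = tensor N [] \<or> (\<exists>p. v = tensor N (replicate p (s0 N)) \<and> p \<ge> 1)" by simp
    then obtain p where "v = tensor N (replicate p (s0 N))"
      by (metis replicate_0)
    thus "v \<in> ?B" by (intro CollectI exI[of _ p]) simp
  next
    fix v assume "v \<in> ?B"
    then obtain p where v: "v = tensor N (replicate p (s0 N))" by auto
    show "v \<in> ?A"
    proof (cases "p = 0")
      case True thus ?thesis using v by simp
    next
      case False
      hence "v \<in> {tensor N (replicate p (s0 N)) | p. p \<ge> 1}" using v by (intro CollectI exI[of _ p]) simp
      thus ?thesis by (rule UnI2)
    qed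
  qed
  thus ?thesis unfolding H_Omega_def H_idx_def by simp
qed

lemma shift_has_sum:
  fixes g :: "nat \<Rightarrow> 'a::{comm_monoid_add,topological_space}"
  shows "((\<lambda>n. if k \<le> n then g (n - k) else 0) has_sum s) UNIV \<longleftrightarrow> (g has_sum s) UNIV"
proof -
  have "((\<lambda>n. if k \<le> n then g (n - k) else 0) has_sum s) UNIV \<longleftrightarrow> ((\<lambda>n. g (n - k)) has_sum s) {k..}"
    by (rule has_sum_cong_neutral) auto
  also have "\<dots> \<longleftrightarrow> (g has_sum s) UNIV"
    by (rule has_sum_reindex_bij_witness[where i="\<lambda>n. n - k" and j="\<lambda>p. p + k", symmetric]) auto
  finally show ?thesis .
qed

lemma shift_summable:
  fixes g :: "nat \<Rightarrow> 'a::{comm_monoid_add,topological_space}"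
  shows "(\<lambda>n. if k \<le> n then g (n - k) else 0) summable_on UNIV \<longleftrightarrow> g summable_on UNIV"
  using shift_has_sum unfolding summable_on_def by blast

lemma dl_ell2: "dl p \<in> ell2 UNIV"
proof (rule ell2I)
  have "(\<lambda>q. (cmod (dl p q))^2) summable_on {p}" by simp
  thus "(\<lambda>q. (cmod (dl p q))^2) summable_on UNIV"
    by (subst summable_on_cong_neutral[where T="{p}" and g="\<lambda>q. (cmod (dl p q))^2"]) (auto simp: dl_def)
qed simp

lemma prod_summable:
  assumes "f \<in> ell2 A" "g \<in> ell2 A"
  shows "(\<lambda>x. cnj (f x) * g x) summable_on A"
proof -
  have "(\<lambda>x. (cmod (f x))^2 + (cmod (g x))^2) summable_on A"
    by (intro summable_on_add ell2_summ assms)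
  hence "(\<lambda>x. norm (cnj (f x) * g x)) summable_on A"
  proof (rule summable_on_comparison_test)
    fix x
    have "cmod (f x) * cmod (g x) \<le> (cmod (f x))^2 + (cmod (g x))^2"
    proof -
      have "0 \<le> (cmod (f x) - cmod (g x))^2" by simp
      hence "2 * (cmod (f x) * cmod (g x)) \<le> (cmod (f x))^2 + (cmod (g x))^2"
        by (simp add: power2_diff)
      moreover have "0 \<le> cmod (f x) * cmod (g x)" by simp
      ultimately show ?thesis by linarith
    qed
    thus "norm (cnj (f x) * g x) \<le> (cmod (f x))^2 + (cmod (g x))^2" by (simp add: norm_mult)
  qed simp
  thus ?thesis using summable_on_iff_abs_summable_on_complex by blast
qed

lemma tail_small:
  fixes g :: "nat \<Rightarrow> real"
  assumes "g summable_on UNIV" "\<And>n. g n \<ge> 0" "e > 0"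
  shows "\<exists>M. infsum (\<lambda>p. if p < M then 0 else g p) UNIV < e"
proof -
  let ?S = "infsum g UNIV"
  have hs: "(g has_sum ?S) UNIV" using assms(1) by simp
  hence "g sums ?S" by (rule has_sum_imp_sums)
  hence "(\<lambda>M. sum g {..<M}) \<longlonglongrightarrow> ?S" by (simp add: sums_def)
  then obtain M where M: "\<bar>sum g {..<M} - ?S\<bar> < e"
    using assms(3) LIMSEQ_D[of "\<lambda>M. sum g {..<M}" ?S e] by (auto simp: dist_real_def)
  have "(g has_sum (?S - sum g {..<M})) (UNIV - {..<M})"
    by (rule has_sum_Diff[OF hs]) auto
  hence "((\<lambda>p. if p < M then 0 else g p) has_sum (?S - sum g {..<M})) UNIV"
    by (subst has_sum_cong_neutral[where T="UNIV - {..<M}" and g=g]) auto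
  hence "infsum (\<lambda>p. if p < M then 0 else g p) UNIV = ?S - sum g {..<M}" by (rule infsumI)
  moreover have "-(sum g {..<M} - ?S) < e" using M abs_less_iff by blast
  ultimately have "infsum (\<lambda>p. if p < M then 0 else g p) UNIV < e" by linarith
  thus ?thesis by blast
qed

lemma small_zero:
  fixes z :: complex
  assumes "K \<ge> 0" "\<And>e. e > 0 \<Longrightarrow> cmod z \<le> K * e"
  shows "z = 0"
proof (rule ccontr)
  assume "z \<noteq> 0"
  hence "cmod z > 0" by simp
  have "cmod z \<le> K * (cmod z / (K + 1))"
    using assms(2)[of "cmod z / (K + 1)"] \<open>cmod z > 0\<close> assms(1) by auto
  also have "\<dots> = (K / (K + 1)) * cmod z" by simp
  also have "\<dots> < 1 * cmod z"
    by (rule mult_strict_right_mono) (use \<open>cmod z > 0\<close> assms(1) in auto)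
  finally show False by simp
qed

lemma cnj_mult_self: "cnj z * z = complex_of_real ((cmod z)^2)"
  by (subst complex_norm_square) (rule mult.commute)

lemma sum_cnj_self: "(\<Sum>w\<in>A. cnj (f w) * f w) = complex_of_real (\<Sum>w\<in>A. (cmod (f w))^2)"
  by (simp only: cnj_mult_self of_real_sum)

context tree begin

lemma one_in: "(1::nat) \<in> {1..N}" using N1 by simp

lemma blk_L: "gb N b \<Longrightarrow> b @ replicate p 1 \<in> L N (length b + p)"
  using one_in by (auto simp: gb_def L_def)

lemma bv_bound: "j \<in> L N n \<Longrightarrow> cmod (bv N x j w) \<le> 1"
proof (cases "w \<in> L N n")
  case True
  assume j: "j \<in> L N n"
  have "(\<Sum>w'\<in>L N n. cnj (bv N x j w') * bv N x j w') = 1" using bv_orth[OF j j] by simp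
  moreover have "complex_of_real (\<Sum>w'\<in>L N n. (cmod (bv N x j w'))^2) = (\<Sum>w'\<in>L N n. cnj (bv N x j w') * bv N x j w')"
    by (rule sum_cnj_self[symmetric])
  ultimately have "complex_of_real (\<Sum>w'\<in>L N n. (cmod (bv N x j w'))^2) = 1"
    by simp
  hence "(\<Sum>w'\<in>L N n. (cmod (bv N x j w'))^2) = 1"
    by (simp only: of_real_eq_1_iff)
  hence "(cmod (bv N x j w))^2 \<le> 1"
    using member_le_sum[of w "L N n" "\<lambda>w'. (cmod (bv N x j w'))^2"] True finite_L by auto
  thus ?thesis by (simp add: power_le_one_iff abs_square_le_1)
next
  case False
  assume j: "j \<in> L N n"
  hence "length j = n" by (simp add: L_def)
  thus ?thesis using False bv_off[of w N "j" x] by auto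
qed

lemma level_inner:
  assumes b: "gb N b" and b': "gb N b'"
  shows "(\<Sum>w\<in>L N n. cnj (E N x b c w) * E N x b' d w)
       = (if length b \<le> n \<and> b = b' then cnj (c (n - length b)) * d (n - length b) else 0)"
proof (cases "length b \<le> n \<and> length b' \<le> n")
  case True
  let ?j = "b @ replicate (n - length b) 1" and ?j' = "b' @ replicate (n - length b') 1"
  have jL: "?j \<in> L N n" "?j' \<in> L N n"
    using blk_L[OF b, of "n - length b"] blk_L[OF b', of "n - length b'"] True by auto
  have "(\<Sum>w\<in>L N n. cnj (E N x b c w) * E N x b' d w)
      = (\<Sum>w\<in>L N n. (cnj (c (n - length b)) * d (n - length b')) * (cnj (bv N x ?j w) * bv N x ?j' w))"
    by (rule sum.cong) (use True in \<open>auto simp: E_on_L L_def\<close>)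
  also have "\<dots> = cnj (c (n - length b)) * d (n - length b') * (if ?j = ?j' then 1 else 0)"
    unfolding sum_distrib_left[symmetric] using bv_orth[OF jL] by simp
  also have "(?j = ?j') = (b = b')" using block_inj[OF b b'] by auto
  finally show ?thesis using True by auto
next
  case False
  have "(\<Sum>w\<in>L N n. cnj (E N x b c w) * E N x b' d w) = 0"
    by (rule sum.neutral) (use False in \<open>auto simp: E_low L_def\<close>)
  thus ?thesis using False by auto
qed

lemma level_norm:
  assumes b: "gb N b"
  shows "(\<Sum>w\<in>L N n. (cmod (E N x b c w))^2) = (if length b \<le> n then (cmod (c (n - length b)))^2 else 0)"
proof -
  have "complex_of_real (\<Sum>w\<in>L N n. (cmod (E N x b c w))^2) = (\<Sum>w\<in>L N n. cnj (E N x b c w) * E N x b c w)"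
    by (rule sum_cnj_self[symmetric])
  also have "\<dots> = (if length b \<le> n then cnj (c (n - length b)) * c (n - length b) else 0)"
    by (simp add: level_inner[OF b b])
  also have "\<dots> = complex_of_real (if length b \<le> n then (cmod (c (n - length b)))^2 else 0)"
    by (simp add: cnj_mult_self)
  finally show ?thesis using of_real_eq_iff by blast
qed

lemma E_ell2:
  assumes b: "gb N b" and c: "c \<in> ell2 UNIV"
  shows "E N x b c \<in> ell2 (words N)"
proof (rule ell2I)
  show "w \<notin> words N \<Longrightarrow> E N x b c w = 0" for w by (rule E_off)
  have "(\<lambda>n. if length b \<le> n then (cmod (c (n - length b)))^2 else 0) summable_on UNIV"
    using shift_summable[of "length b" "\<lambda>p. (cmod (c p))^2"] ell2_summ[OF c] by simp
  hence "(\<lambda>n. \<Sum>w\<in>L N n. (cmod (E N x b c w))^2) summable_on UNIV"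
    by (simp add: level_norm[OF b])
  thus "(\<lambda>w. (cmod (E N x b c w))^2) summable_on words N"
    by (rule summable_levels_nonneg[rotated]) simp
qed

lemma E_inner:
  assumes b: "gb N b" and b': "gb N b'" and c: "c \<in> ell2 UNIV" and d: "d \<in> ell2 UNIV"
  shows "l2inner (words N) (E N x b c) (E N x b' d) = (if b = b' then l2inner UNIV c d else 0)"
proof -
  let ?s = "infsum (\<lambda>w. cnj (E N x b c w) * E N x b' d w) (words N)"
  have "((\<lambda>w. cnj (E N x b c w) * E N x b' d w) has_sum ?s) (words N)"
    using prod_summable[OF E_ell2[OF b c] E_ell2[OF b' d]] by simp
  hence "((\<lambda>n. \<Sum>w\<in>L N n. cnj (E N x b c w) * E N x b' d w) has_sum ?s) UNIV"
    by (rule has_sum_levels)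
  hence hs: "((\<lambda>n. if length b \<le> n \<and> b = b' then cnj (c (n - length b)) * d (n - length b) else 0) has_sum ?s) UNIV"
    by (simp add: level_inner[OF b b'])
  show ?thesis
  proof (cases "b = b'")
    case True
    hence "((\<lambda>p. cnj (c p) * d p) has_sum ?s) UNIV"
      using hs shift_has_sum[of "length b" "\<lambda>p. cnj (c p) * d p" ?s] by simp
    thus ?thesis using True by (simp add: l2inner_def infsumI)
  next
    case False
    hence "?s = 0" using hs has_sum_unique[OF _ has_sum_0] by auto
    thus ?thesis using False by (simp add: l2inner_def)
  qed
qed

lemma E_norm:
  assumes b: "gb N b" and c: "c \<in> ell2 UNIV"
  shows "l2norm (words N) (E N x b c) = l2norm UNIV c"
proof -
  let ?s = "infsum (\<lambda>w. (cmod (E N x b c w))^2) (words N)"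
  have "((\<lambda>w. (cmod (E N x b c w))^2) has_sum ?s) (words N)"
    using ell2_summ[OF E_ell2[OF b c]] by simp
  hence "((\<lambda>n. \<Sum>w\<in>L N n. (cmod (E N x b c w))^2) has_sum ?s) UNIV"
    by (rule has_sum_levels)
  hence "((\<lambda>n. if length b \<le> n then (cmod (c (n - length b)))^2 else 0) has_sum ?s) UNIV"
    by (simp add: level_norm[OF b])
  hence "((\<lambda>p. (cmod (c p))^2) has_sum ?s) UNIV"
    using shift_has_sum[of "length b" "\<lambda>p. (cmod (c p))^2" ?s] by simp
  thus ?thesis by (simp add: l2norm_def infsumI)
qed

lemma Uc_E: "gb N b \<Longrightarrow> Uc N x b (E N x b c) = c"
proof (rule ext)
  fix p assume b: "gb N b"
  let ?j = "b @ replicate p 1"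
  have "Uc N x b (E N x b c) p = (\<Sum>w\<in>L N (length b + p). c p * (cnj (bv N x ?j w) * bv N x ?j w))"
    unfolding Uc_def by (rule sum.cong) (auto simp: E_on_L L_def)
  also have "\<dots> = c p" unfolding sum_distrib_left[symmetric] using bv_orth[OF blk_L[OF b] blk_L[OF b]] by simp
  finally show "Uc N x b (E N x b c) p = c p" .
qed

end



lemma H_idx_eq:
  assumes "\<forall>k\<in>{1..N}. x 1 k = s0 N k"
  shows "H_idx N x b = closed_span (words N) (range (\<lambda>p. E N x b (dl p)))"
proof -
  have "{tensor N (map x b @ replicate p (s0 N)) | p. True} = range (\<lambda>p. E N x b (dl p))"
    by (auto simp: tensor_gen[where x=x and N=N, OF assms] E_dl)
  thus ?thesis unfolding H_idx_def by simp
qed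

context tree begin

lemma gen_ell2: "gb N b \<Longrightarrow> range (\<lambda>p. E N x b (dl p)) \<subseteq> ell2 (words N)"
  using E_ell2 dl_ell2 by auto

lemma E_trunc:
  "E N x b (\<lambda>p. if p < M then c p else 0) = (\<Sum>p<M. sc (c p) (E N x b (dl p)))"
proof (rule ext)
  fix w
  have "(\<Sum>p<M. sc (c p) (E N x b (dl p))) w = (\<Sum>p<M. c p * E N x b (dl p) w)"
    by (simp add: fun_sum_apply sc_def)
  also have "\<dots> = E N x b (\<lambda>p. if p < M then c p else 0) w"
  proof (cases "length b \<le> length w")
    case True
    let ?q = "length w - length b"
    have "(\<Sum>p<M. c p * E N x b (dl p) w) = (\<Sum>p\<in>{..<M}. if p = ?q then c ?q * bv N x (b @ replicate ?q 1) w else 0)"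
      by (rule sum.cong) (auto simp: E_def dl_def True)
    also have "\<dots> = (if ?q \<in> {..<M} then c ?q * bv N x (b @ replicate ?q 1) w else 0)"
      by (rule sum.delta) simp
    finally show ?thesis using True by (simp add: E_def)
  qed (simp add: E_def)
  finally show "E N x b (\<lambda>p. if p < M then c p else 0) w = (\<Sum>p<M. sc (c p) (E N x b (dl p))) w"
    by (rule sym)
qed

lemma H_E:
  assumes b: "gb N b" and c: "c \<in> ell2 UNIV"
  shows "E N x b c \<in> H_idx N x b"
  unfolding H_idx_eq[where x=x and N=N, OF x1] closed_span_def
proof (intro CollectI conjI allI impI)
  show "E N x b c \<in> ell2 (words N)" by (rule E_ell2[OF b c])
  fix e :: real assume e: "e > 0"
  obtain M where M: "infsum (\<lambda>p. if p < M then 0 else (cmod (c p))^2) UNIV < e^2"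
    using tail_small[of "\<lambda>p. (cmod (c p))^2" "e^2"] ell2_summ[OF c] e by auto
  let ?cM = "\<lambda>p. if p < M then c p else 0"
  let ?t = "\<lambda>p. if p < M then 0 else c p"
  have "E N x b ?cM \<in> cspan (range (\<lambda>p. E N x b (dl p)))"
    unfolding E_trunc cspan_eq
    by (intro fm.span_sum fm.span_scale fm.span_base) auto
  moreover have "l2norm (words N) (\<lambda>w. E N x b c w - E N x b ?cM w) < e"
  proof -
    have tt: "(\<lambda>p. c p - ?cM p) = ?t" by auto
    have t: "?t \<in> ell2 UNIV"
    proof (rule ell2I)
      show "(\<lambda>p. (cmod (?t p))^2) summable_on UNIV"
        by (rule summable_on_comparison_test[OF ell2_summ[OF c]]) auto
    qed simp
    have "l2norm (words N) (\<lambda>w. E N x b c w - E N x b ?cM w) = l2norm (words N) (E N x b ?t)"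
      using E_diff[of N x b c ?cM] tt by simp
    also have "\<dots> = l2norm UNIV ?t" by (rule E_norm[OF b t])
    also have "\<dots> = sqrt (infsum (\<lambda>p. if p < M then 0 else (cmod (c p))^2) UNIV)"
      unfolding l2norm_def by (rule arg_cong[where f=sqrt], rule infsum_cong) auto
    also have "\<dots> < sqrt (e^2)" using M by (simp only: real_sqrt_less_iff)
    also have "\<dots> = e" using e by simp
    finally show ?thesis .
  qed
  ultimately show "\<exists>g\<in>cspan (range (\<lambda>p. E N x b (dl p))). l2norm (words N) (\<lambda>w. E N x b c w - g w) < e"
    by blast
qed

lemma cspan_E:
  assumes b: "gb N b" and g: "g \<in> cspan (range (\<lambda>p. E N x b (dl p)))"
  shows "g = E N x b (Uc N x b g)"
  using g unfolding cspan_eq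
proof (induction rule: fm.span_induct_alt)
  case base
  show ?case by (simp add: func_zero Uc_zero E_zero)
next
  case (step a v y)
  then obtain q where v: "v = E N x b (dl q)" by auto
  have "Uc N x b (sc a v + y) = Uc N x b (\<lambda>w. y w + a * v w)"
    by (simp add: sc_def func_plus add.commute)
  also have "\<dots> = (\<lambda>p. Uc N x b y p + a * dl q p)"
    by (simp add: Uc_lin v Uc_E[OF b])
  finally have "E N x b (Uc N x b (sc a v + y)) = (\<lambda>w. E N x b (Uc N x b y) w + a * E N x b (dl q) w)"
    by (simp add: E_lin)
  also have "\<dots> = sc a v + y" using v by (simp add: sc_def func_plus add.commute step.IH[symmetric])
  finally show ?case unfolding func_plus by simp
qed

lemma Uc_bound:
  assumes b: "gb N b" and h: "h \<in> ell2 (words N)"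
  shows "cmod (Uc N x b h p) \<le> real (card (L N (length b + p))) * l2norm (words N) h"
proof -
  have "cmod (Uc N x b h p) \<le> (\<Sum>w\<in>L N (length b + p). cmod (cnj (bv N x (b @ replicate p 1) w) * h w))"
    unfolding Uc_def by (rule norm_sum)
  also have "\<dots> \<le> (\<Sum>w\<in>L N (length b + p). l2norm (words N) h)"
  proof (rule sum_mono)
    fix w assume w: "w \<in> L N (length b + p)"
    have "cmod (cnj (bv N x (b @ replicate p 1) w) * h w) = cmod (bv N x (b @ replicate p 1) w) * cmod (h w)"
      by (simp add: norm_mult)
    also have "\<dots> \<le> 1 * l2norm (words N) h"
    proof (rule mult_mono)
      show "cmod (bv N x (b @ replicate p 1) w) \<le> 1"
        using bv_bound[OF blk_L[OF b]] .
      show "cmod (h w) \<le> l2norm (words N) h" using l2norm_point[OF h] w L_sub by blast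
    qed auto
    finally show "cmod (cnj (bv N x (b @ replicate p 1) w) * h w) \<le> l2norm (words N) h" by simp
  qed
  also have "\<dots> = real (card (L N (length b + p))) * l2norm (words N) h" by simp
  finally show ?thesis .
qed

lemma H_char:
  assumes b: "gb N b" and f: "f \<in> H_idx N x b"
  shows "f = E N x b (Uc N x b f)" "Uc N x b f \<in> ell2 UNIV"
proof -
  let ?G = "range (\<lambda>p. E N x b (dl p))"
  have fcs: "f \<in> closed_span (words N) ?G" using f unfolding H_idx_eq[where x=x and N=N, OF x1] .
  hence fl: "f \<in> ell2 (words N)" using closed_span_sub by blast
  show fE: "f = E N x b (Uc N x b f)"
  proof (rule ext)
    fix w
    show "f w = E N x b (Uc N x b f) w"
    proof (cases "w \<in> words N")
      case False thus ?thesis using fl by (simp add: ell2_vanish E_off)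
    next
      case True
      let ?K = "1 + real (card (L N (length w)))"
      have "f w - E N x b (Uc N x b f) w = 0"
      proof (rule small_zero)
        show "?K \<ge> 0" by simp
        fix e :: real assume e: "e > 0"
        have "\<forall>e>0. \<exists>g\<in>cspan ?G. l2norm (words N) (\<lambda>w. f w - g w) < e"
          using fcs unfolding closed_span_def by simp
        then obtain g where g: "g \<in> cspan ?G" and ge: "l2norm (words N) (\<lambda>w. f w - g w) < e"
          using e by auto
        have gl: "g \<in> ell2 (words N)" using cspan_ell2[OF gen_ell2[OF b]] g by blast
        let ?h = "\<lambda>w. f w - g w"
        have hl: "?h \<in> ell2 (words N)" by (rule ell2_diff[OF fl gl])
        have gE: "g = E N x b (Uc N x b g)" by (rule cspan_E[OF b g])
        have eq: "f w - E N x b (Uc N x b f) w = ?h w - E N x b (Uc N x b ?h) w"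
        proof -
          have Eh: "E N x b (Uc N x b ?h) w = E N x b (Uc N x b f) w - E N x b (Uc N x b g) w"
            by (simp add: Uc_diff E_diff)
          have gw: "g w = E N x b (Uc N x b g) w" using fun_cong[OF gE, of w] .
          show ?thesis unfolding Eh gw by (simp add: algebra_simps)
        qed
        have b1: "cmod (?h w) \<le> l2norm (words N) ?h" by (rule l2norm_point[OF hl True])
        have b2: "cmod (E N x b (Uc N x b ?h) w) \<le> real (card (L N (length w))) * l2norm (words N) ?h"
        proof (cases "length b \<le> length w")
          case True
          let ?p = "length w - length b"
          have lp: "length b + ?p = length w" using True by simp
          have "cmod (E N x b (Uc N x b ?h) w) = cmod (Uc N x b ?h ?p) * cmod (bv N x (b @ replicate ?p 1) w)"
            using True by (simp add: E_def norm_mult)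
          also have "\<dots> \<le> cmod (Uc N x b ?h ?p) * 1"
            by (rule mult_left_mono) (use bv_bound[OF blk_L[OF b, of ?p]] in auto)
          also have "\<dots> \<le> real (card (L N (length w))) * l2norm (words N) ?h"
            using Uc_bound[OF b hl, of ?p] lp by simp
          finally show ?thesis .
        qed (simp add: E_def l2norm_nonneg)
        have "cmod (f w - E N x b (Uc N x b f) w) \<le> cmod (?h w) + cmod (E N x b (Uc N x b ?h) w)"
          unfolding eq by (rule norm_triangle_ineq4)
        also have "\<dots> \<le> ?K * l2norm (words N) ?h" using b1 b2 by (simp add: algebra_simps)
        also have "\<dots> \<le> ?K * e" using ge by (intro mult_left_mono) auto
        finally show "cmod (f w - E N x b (Uc N x b f) w) \<le> ?K * e" .
      qed
      thus ?thesis by simp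
    qed
  qed
  show "Uc N x b f \<in> ell2 UNIV"
  proof (rule ell2I)
    define c where "c = Uc N x b f"
    have fE': "f = E N x b c" unfolding c_def by (rule fE)
    have "(\<lambda>w. (cmod (f w))^2) summable_on words N" using ell2_summ[OF fl] .
    hence "(\<lambda>w. (cmod (E N x b c w))^2) summable_on words N" by (simp only: fE')
    hence "((\<lambda>w. (cmod (E N x b c w))^2) has_sum infsum (\<lambda>w. (cmod (E N x b c w))^2) (words N)) (words N)"
      by simp
    hence "((\<lambda>n. \<Sum>w\<in>L N n. (cmod (E N x b c w))^2) has_sum infsum (\<lambda>w. (cmod (E N x b c w))^2) (words N)) UNIV"
      by (rule has_sum_levels)
    hence "((\<lambda>n. if length b \<le> n then (cmod (c (n - length b)))^2 else 0) has_sum infsum (\<lambda>w. (cmod (E N x b c w))^2) (words N)) UNIV"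
      by (simp add: level_norm[OF b])
    hence "((\<lambda>p. (cmod (c p))^2) has_sum infsum (\<lambda>w. (cmod (E N x b c w))^2) (words N)) UNIV"
      using shift_has_sum[of "length b" "\<lambda>p. (cmod (c p))^2"] by simp
    thus "(\<lambda>p. (cmod (Uc N x b f p))^2) summable_on UNIV" unfolding c_def[symmetric] by (rule has_sum_imp_summable)
  qed simp
qed

lemma H_eq:
  assumes b: "gb N b"
  shows "H_idx N x b = E N x b ` ell2 UNIV"
proof (rule Set.set_eqI, rule iffI)
  fix f assume f: "f \<in> H_idx N x b"
  show "f \<in> E N x b ` ell2 UNIV"
    by (rule image_eqI[of f "E N x b" "Uc N x b f"]) (rule H_char(1)[OF b f], rule H_char(2)[OF b f])
next
  fix f assume "f \<in> E N x b ` ell2 UNIV"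
  then obtain c where c: "c \<in> ell2 UNIV" and fc: "f = E N x b c" by blast
  show "f \<in> H_idx N x b" unfolding fc by (rule H_E[OF b c])
qed

end



definition Dg :: "nat \<Rightarrow> nat list \<Rightarrow> (nat \<Rightarrow> complex) \<Rightarrow> (nat \<Rightarrow> complex)" where
  "Dg N b = (if b = [] then D_Omega N else D_op N)"

lemma Dg_val: "Dg N b c p = of_nat (N + 1) * c p
    - complex_of_real (sqrt (real N)) * ((if p = 0 then 0 else c (p - 1)) + c (Suc p))
    - (if b = [] \<and> p = 0 then c 0 else 0)"
  by (auto simp: Dg_def D_Omega_def D_op_def ReS_def shift_def shift_adj_def proj0_def)

lemma butlast_snoc_decomp: "w \<noteq> [] \<Longrightarrow> w = butlast w @ [last w]"
  by simp

context tree begin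

abbreviation "r \<equiv> complex_of_real (sqrt (real N))"

lemma r_inv: "r * complex_of_real (1 / sqrt (real N)) = 1"
proof -
  have "sqrt (real N) > 0" using N1 by simp
  hence "sqrt (real N) * (1 / sqrt (real N)) = 1" by simp
  thus ?thesis by (metis of_real_mult of_real_1)
qed

lemma r_nz: "r \<noteq> 0" using N1 by simp

lemma x1_val: assumes i: "i \<in> {1..N}" shows "x 1 i = complex_of_real (1 / sqrt (real N))"
proof -
  have "x 1 i = s0 N i" using x1 i by blast
  thus ?thesis using i by (simp add: s0_def)
qed

lemma sum_x1: "(\<Sum>i=1..N. x 1 i) = r"
proof -
  have "(\<Sum>i=1..N. x 1 i) = (\<Sum>i=1..N. complex_of_real (1 / sqrt (real N)))"
    by (rule sum.cong) (auto simp only: x1_val)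
  also have "\<dots> = complex_of_real (real N * (1 / sqrt (real N)))" by simp
  also have "real N * (1 / sqrt (real N)) = sqrt (real N)"
    using N1 by (simp add: real_div_sqrt)
  finally show ?thesis .
qed

lemma sum_xa: assumes a: "a \<in> {1..N}" "a \<noteq> 1" shows "(\<Sum>i=1..N. x a i) = 0"
proof -
  have "(\<Sum>k=1..N. cnj (x 1 k) * x a k) = 0" using orth one_in a by auto
  moreover have "(\<Sum>k=1..N. cnj (x 1 k) * x a k) = complex_of_real (1 / sqrt (real N)) * (\<Sum>k=1..N. x a k)"
    unfolding sum_distrib_left by (rule sum.cong) (auto simp: x1_val[simplified])
  ultimately show ?thesis using N1 by simp
qed

lemma bv_snoc_in: "i \<in> {1..N} \<Longrightarrow> bv N x (j @ [a]) (w @ [i]) = bv N x j w * x a i"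
  by (simp add: bv_snoc)

lemma lap_E:
  assumes b: "gb N b"
  shows "lap N (E N x b c) = E N x b (Dg N b c)"
proof (rule ext)
  fix w
  let ?f = "E N x b c"
  show "lap N ?f w = E N x b (Dg N b c) w"
  proof (cases "w \<in> words N")
    case False thus ?thesis by (simp add: lap_def E_off)
  next
    case W: True
    let ?n = "length w"
    have wset: "set w \<subseteq> {1..N}" using W by (simp add: words_def)
    have lapw: "lap N ?f w = (of_nat N + (if w = [] then 0 else 1)) * ?f w - (\<Sum>i=1..N. ?f (w @ [i]))
        - (if w = [] then 0 else ?f (butlast w))"
      using W by (simp add: lap_def)
    show ?thesis
    proof (cases "length b \<le> ?n")
      case True
      define p where "p = ?n - length b"
      define j where "j = b @ replicate p 1"
      have np: "?n = length b + p" using True p_def by simp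
      have fw: "?f w = c p * bv N x j w" using True by (simp add: E_def p_def j_def)
      have rhs: "E N x b (Dg N b c) w = Dg N b c p * bv N x j w" using True by (simp add: E_def p_def j_def)
      have child: "(\<Sum>i=1..N. ?f (w @ [i])) = r * c (Suc p) * bv N x j w"
      proof -
        have jj: "b @ replicate (Suc p) 1 = j @ [1]" by (simp add: j_def replicate_append_same)
        have "(\<Sum>i=1..N. ?f (w @ [i])) = (\<Sum>i=1..N. c (Suc p) * bv N x j w * x 1 i)"
        proof (rule sum.cong[OF refl])
          fix i assume i: "i \<in> {1..N}"
          have "?f (w @ [i]) = c (Suc p) * bv N x (b @ replicate (Suc p) 1) (w @ [i])"
            using np by (simp add: E_def)
          also have "\<dots> = c (Suc p) * bv N x j w * x 1 i" by (simp only: jj) (simp add: bv_snoc_in[OF i])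
          finally show "?f (w @ [i]) = c (Suc p) * bv N x j w * x 1 i" .
        qed
        also have "\<dots> = c (Suc p) * bv N x j w * (\<Sum>i=1..N. x 1 i)" by (simp add: sum_distrib_left)
        finally show ?thesis by (simp add: sum_x1[simplified] mult.commute mult.left_commute)
      qed
      have parent: "(if w = [] then 0 else ?f (butlast w)) = (if p = 0 then 0 else r * c (p - 1) * bv N x j w)"
      proof (cases "w = []")
        case True thus ?thesis using np by simp
      next
        case wne: False
        show ?thesis
        proof (cases "p = 0")
          case True
          hence "?f (butlast w) = 0" using np wne by (intro E_low) (cases w, auto)
          thus ?thesis using True wne by simp
        next
          case False
          define j' where "j' = b @ replicate (p - 1) 1"
          have jj: "j = j' @ [1]" using False by (cases p) (simp_all add: j_def j'_def replicate_append_same)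
          have lw: "last w \<in> {1..N}" using wset wne last_in_set[OF wne] by blast
          have fb: "?f (butlast w) = c (p - 1) * bv N x j' (butlast w)"
            using np False by (simp add: E_def j'_def)
          have "bv N x j w = bv N x j' (butlast w) * x 1 (last w)"
            using bv_snoc_in[OF lw, of j' 1 "butlast w"] jj wne by simp
          hence "r * bv N x j w = bv N x j' (butlast w) * (r * complex_of_real (1 / sqrt (real N)))"
            by (simp only: x1_val[OF lw] mult_ac)
          hence "r * bv N x j w = bv N x j' (butlast w)"
            by (simp only: r_inv mult_1_right)
          hence "?f (butlast w) = r * c (p - 1) * bv N x j w"
            using fb by (simp add: mult.commute mult.left_commute)
          thus ?thesis using wne False by simp
        qed
      qed
      have wnil: "(w = []) = (b = [] \<and> p = 0)" using np by auto
      have "lap N ?f w = ((of_nat N + (if w = [] then 0 else 1)) * c p - r * c (Suc p)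
             - (if p = 0 then 0 else r * c (p - 1))) * bv N x j w"
        unfolding lapw fw child parent by (simp add: algebra_simps)
      also have "(of_nat N + (if w = [] then 0 else 1)) * c p - r * c (Suc p)
             - (if p = 0 then 0 else r * c (p - 1)) = Dg N b c p"
        unfolding Dg_val wnil by (auto simp: algebra_simps)
      finally show ?thesis using rhs by simp
    next
      case False
      have f0: "?f w = 0" using False by (simp add: E_low)
      have rhs: "E N x b (Dg N b c) w = 0" using False by (simp add: E_low)
      have par: "(if w = [] then 0 else ?f (butlast w)) = 0"
        using False by (auto intro!: E_low)
      have child: "(\<Sum>i=1..N. ?f (w @ [i])) = 0"
      proof (cases "Suc ?n = length b")
        case False2: False
        thus ?thesis using False by (auto intro!: sum.neutral E_low)
      next
        case True
        hence bne: "b \<noteq> []" by auto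
        have lb: "last b \<in> {1..N}" "last b \<noteq> 1"
          using b bne last_in_set[OF bne] unfolding gb_def by blast+
        have bb: "b = butlast b @ [last b]" using bne by simp
        have "(\<Sum>i=1..N. ?f (w @ [i])) = (\<Sum>i=1..N. c 0 * bv N x (butlast b) w * x (last b) i)"
        proof (rule sum.cong[OF refl])
          fix i assume i: "i \<in> {1..N}"
          have "?f (w @ [i]) = c 0 * bv N x b (w @ [i])" using True by (simp add: E_def)
          also have "\<dots> = c 0 * bv N x (butlast b) w * x (last b) i"
            by (subst bb) (simp add: bv_snoc_in[OF i])
          finally show "?f (w @ [i]) = c 0 * bv N x (butlast b) w * x (last b) i" .
        qed
        also have "\<dots> = c 0 * bv N x (butlast b) w * (\<Sum>i=1..N. x (last b) i)"
          by (simp add: sum_distrib_left)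
        also have "\<dots> = 0" using sum_xa[OF lb] by simp
        finally show ?thesis .
      qed
      show ?thesis unfolding lapw f0 child par rhs by simp
    qed
  qed
qed

end



lemma shift_ell2: "c \<in> ell2 UNIV \<Longrightarrow> shift c \<in> ell2 UNIV"
proof (rule ell2I)
  assume c: "c \<in> ell2 UNIV"
  have "(\<lambda>p. if 1 \<le> p then (cmod (c (p - 1)))^2 else 0) summable_on UNIV"
    using shift_summable[of 1 "\<lambda>p. (cmod (c p))^2"] ell2_summ[OF c] by simp
  moreover have "(\<lambda>p. (cmod (shift c p))^2) = (\<lambda>p. if 1 \<le> p then (cmod (c (p - 1)))^2 else 0)"
    by (auto simp: shift_def)
  ultimately show "(\<lambda>p. (cmod (shift c p))^2) summable_on UNIV" by simp
qed simp

lemma shift_adj_ell2: "c \<in> ell2 UNIV \<Longrightarrow> shift_adj c \<in> ell2 UNIV"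
proof (rule ell2I)
  assume c: "c \<in> ell2 UNIV"
  have "(\<lambda>p. (cmod (c p))^2) summable_on range Suc"
    by (rule summable_on_subset_banach[OF ell2_summ[OF c]]) auto
  hence "((\<lambda>p. (cmod (c p))^2) \<circ> Suc) summable_on UNIV"
    by (subst summable_on_reindex[symmetric]) auto
  thus "(\<lambda>p. (cmod (shift_adj c p))^2) summable_on UNIV" by (simp add: shift_adj_def comp_def)
qed simp

lemma proj0_ell2: "proj0 c \<in> ell2 UNIV"
proof -
  have "proj0 c = (\<lambda>q. c 0 * dl 0 q)" by (auto simp: proj0_def dl_def)
  thus ?thesis using ell2_scale[OF dl_ell2] by simp
qed

lemma Dg_ell2: assumes c: "c \<in> ell2 UNIV" shows "Dg N b c \<in> ell2 UNIV"
proof -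
  let ?r = "complex_of_real (sqrt (real N))"
  have op: "D_op N c = (\<lambda>k. of_nat (N+1) * c k + (- ?r) * (shift c k + shift_adj c k))"
    by (auto simp: D_op_def ReS_def algebra_simps)
  have opl: "D_op N c \<in> ell2 UNIV"
    unfolding op by (intro ell2_add ell2_scale shift_ell2 shift_adj_ell2 c)
  have om: "D_Omega N c = (\<lambda>k. D_op N c k + (-1) * proj0 c k)"
    by (auto simp: D_Omega_def D_op_def)
  have oml: "D_Omega N c \<in> ell2 UNIV"
    unfolding om by (intro ell2_add ell2_scale opl proj0_ell2)
  show ?thesis using opl oml by (simp add: Dg_def)
qed

context tree begin

definition Pk :: "nat list \<Rightarrow> nat \<Rightarrow> nat \<Rightarrow> complex" where
  "Pk b k = (Dg N b ^^ k) (dl 0)"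

lemma Pk_supp: "(\<forall>q>k. Pk b k q = 0) \<and> Pk b k k = (- r)^k"
proof (induction k)
  case 0 thus ?case by (simp add: Pk_def dl_def)
next
  case (Suc k)
  have st: "Pk b (Suc k) = Dg N b (Pk b k)" by (simp add: Pk_def)
  have z: "\<And>q. q > k \<Longrightarrow> Pk b k q = 0" using Suc.IH by blast
  have kk: "Pk b k k = (- r)^k" using Suc.IH by blast
  have "\<forall>q>Suc k. Pk b (Suc k) q = 0"
  proof (intro allI impI)
    fix q assume q: "q > Suc k"
    thus "Pk b (Suc k) q = 0" unfolding st Dg_val using z[of q] z[of "q - 1"] z[of "Suc q"] by auto
  qed
  moreover have "Pk b (Suc k) (Suc k) = (- r)^(Suc k)"
    unfolding st Dg_val using z[of "Suc k"] z[of "Suc (Suc k)"] kk by simp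
  ultimately show ?case by blast
qed

lemma Pk_trunc: "Pk b k = (\<lambda>p. if p < Suc k then Pk b k p else 0)"
  using Pk_supp[of k b] by (auto simp: not_less_eq)

lemma lap_iter: "gb N b \<Longrightarrow> (lap N ^^ k) (E N x b (dl 0)) = E N x b (Pk b k)"
  by (induction k) (simp_all add: Pk_def lap_E)

lemma cyclic:
  assumes b: "gb N b"
  shows "cyclic_subspace (words N) (lap N) (H_idx N x b)"
  unfolding cyclic_subspace_def
proof (rule bexI[of _ "E N x b (dl 0)"])
  show "E N x b (dl 0) \<in> H_idx N x b" by (rule H_E[OF b dl_ell2])
  let ?S1 = "{(lap N ^^ k) (E N x b (dl 0)) | k. True}"
  let ?S2 = "range (\<lambda>p. E N x b (dl p))"
  have S1: "?S1 = range (\<lambda>k. E N x b (Pk b k))" by (auto simp: lap_iter[OF b])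
  have EP: "E N x b (Pk b k) = (\<Sum>p<Suc k. sc (Pk b k p) (E N x b (dl p)))" for k
    by (subst Pk_trunc) (rule E_trunc)
  have A: "?S1 \<subseteq> fm.span ?S2"
  proof
    fix v assume "v \<in> ?S1"
    then obtain k where v: "v = E N x b (Pk b k)" unfolding S1 by blast
    show "v \<in> fm.span ?S2" unfolding v EP by (intro fm.span_sum fm.span_scale fm.span_base) auto
  qed
  have B: "E N x b (dl k) \<in> fm.span ?S1" for k
  proof (induction k rule: less_induct)
    case (less k)
    have nz: "(- r)^k \<noteq> 0" using r_nz by simp
    have "E N x b (Pk b k) = sc (Pk b k k) (E N x b (dl k)) + (\<Sum>p<k. sc (Pk b k p) (E N x b (dl p)))"
      unfolding EP by (simp add: add.commute)
    hence "E N x b (Pk b k) - (\<Sum>p<k. sc (Pk b k p) (E N x b (dl p))) = sc ((- r)^k) (E N x b (dl k))"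
      using Pk_supp[of k b] by simp
    hence eq: "E N x b (dl k) = sc (inverse ((- r)^k)) (E N x b (Pk b k) - (\<Sum>p<k. sc (Pk b k p) (E N x b (dl p))))"
      using nz by simp
    have "E N x b (Pk b k) \<in> fm.span ?S1" unfolding S1 by (intro fm.span_base) auto
    moreover have "(\<Sum>p<k. sc (Pk b k p) (E N x b (dl p))) \<in> fm.span ?S1"
      using less.IH by (intro fm.span_sum fm.span_scale) auto
    ultimately show ?case unfolding eq by (intro fm.span_scale fm.span_diff)
  qed
  have "fm.span ?S1 = fm.span ?S2"
    unfolding fm.span_eq using A B by blast
  thus "H_idx N x b = closed_span (words N) ?S1"
    unfolding H_idx_eq[where x=x and N=N, OF x1] by (intro closed_span_cong) (simp add: cspan_eq)
qed

lemma orth_blocks: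
  assumes b: "gb N b" and b': "gb N b'" and ne: "b \<noteq> b'"
    and f: "f \<in> H_idx N x b" and g: "g \<in> H_idx N x b'"
  shows "l2inner (words N) f g = 0"
proof -
  obtain c where c: "c \<in> ell2 UNIV" "f = E N x b c" using f unfolding H_eq[OF b] by blast
  obtain d where d: "d \<in> ell2 UNIV" "g = E N x b' d" using g unfolding H_eq[OF b'] by blast
  show ?thesis unfolding c(2) d(2) E_inner[OF b b' c(1) d(1)] using ne by simp
qed

lemma unit_eq:
  assumes b: "gb N b"
  shows "unitarily_equivalent (words N) (lap N) (H_idx N x b) UNIV (Dg N b) (ell2 UNIV)"
  unfolding unitarily_equivalent_def
proof (intro conjI ballI exI[of _ "Uc N x b"])
  fix f assume f: "f \<in> H_idx N x b"
  obtain c where c: "c \<in> ell2 UNIV" "f = E N x b c" using f unfolding H_eq[OF b] by blast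
  show "lap N f \<in> H_idx N x b" unfolding c(2) lap_E[OF b] by (rule H_E[OF b Dg_ell2[OF c(1)]])
  show "Uc N x b (lap N f) = Dg N b (Uc N x b f)" unfolding c(2) lap_E[OF b] Uc_E[OF b] ..
next
  show "bij_betw (Uc N x b) (H_idx N x b) (ell2 UNIV)"
  proof (rule bij_betw_byWitness[where f'="E N x b"])
    show "\<forall>a\<in>H_idx N x b. E N x b (Uc N x b a) = a" using H_char(1)[OF b] by metis
    show "\<forall>a\<in>ell2 UNIV. Uc N x b (E N x b a) = a" using Uc_E[OF b] by blast
    show "Uc N x b ` H_idx N x b \<subseteq> ell2 UNIV" using H_char(2)[OF b] by blast
    show "E N x b ` ell2 UNIV \<subseteq> H_idx N x b" using H_E[OF b] by blast
  qed
next
  fix f g assume f: "f \<in> H_idx N x b" and g: "g \<in> H_idx N x b"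
  show "\<forall>c. Uc N x b (\<lambda>x. f x + c * g x) = (\<lambda>y. Uc N x b f y + c * Uc N x b g y)"
    by (simp add: Uc_lin)
  obtain c where c: "c \<in> ell2 UNIV" "f = E N x b c" using f unfolding H_eq[OF b] by blast
  obtain d where d: "d \<in> ell2 UNIV" "g = E N x b d" using g unfolding H_eq[OF b] by blast
  show "l2inner UNIV (Uc N x b f) (Uc N x b g) = l2inner (words N) f g"
    unfolding c(2) d(2) Uc_E[OF b] E_inner[OF b b c(1) d(1)] by simp
qed

lemma delta_span:
  assumes w0: "w0 \<in> L N n"
  shows "(\<lambda>w. if w = w0 then 1 else 0) = (\<Sum>j\<in>L N n. sc (cnj (bv N x j w0)) (bv N x j))"
proof (rule ext)
  fix w
  have "(\<Sum>j\<in>L N n. sc (cnj (bv N x j w0)) (bv N x j)) w = (\<Sum>j\<in>L N n. cnj (bv N x j w0) * bv N x j w)"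
    by (simp add: fun_sum_apply sc_def)
  also have "\<dots> = (if w = w0 then 1 else 0)"
  proof (cases "w \<in> L N n")
    case True thus ?thesis using bv_rows[OF w0 True] by auto
  next
    case False
    have "(\<Sum>j\<in>L N n. cnj (bv N x j w0) * bv N x j w) = 0"
      by (rule sum.neutral) (use False in \<open>auto simp: bv_off L_def\<close>)
    thus ?thesis using False w0 by auto
  qed
  finally show "(if w = w0 then 1 else 0) = (\<Sum>j\<in>L N n. sc (cnj (bv N x j w0)) (bv N x j)) w" by simp
qed

lemma dense:
  assumes bvS: "\<And>j. j \<in> words N \<Longrightarrow> bv N x j \<in> S"
    and f: "f \<in> ell2 (words N)"
  shows "f \<in> closed_span (words N) S"
  unfolding closed_span_def
proof (intro CollectI conjI allI impI)
  show "f \<in> ell2 (words N)" by (rule f)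
  fix e :: real assume e: "e > 0"
  let ?a = "\<lambda>n. \<Sum>w\<in>L N n. (cmod (f w))^2"
  let ?s = "infsum (\<lambda>w. (cmod (f w))^2) (words N)"
  have "((\<lambda>w. (cmod (f w))^2) has_sum ?s) (words N)" using ell2_summ[OF f] by simp
  hence "(?a has_sum ?s) UNIV" by (rule has_sum_levels)
  hence asum: "?a summable_on UNIV" by (rule has_sum_imp_summable)
  have nn: "\<And>n. 0 \<le> ?a n" by (simp add: sum_nonneg)
  obtain M where M: "infsum (\<lambda>n. if n < M then 0 else ?a n) UNIV < e^2"
    using tail_small[OF asum nn, of "e^2"] e by auto
  let ?g = "\<lambda>w. if length w < M then f w else 0"
  let ?d = "\<lambda>w0 w. if w = w0 then (1::complex) else 0"
  have dS: "?d w0 \<in> fm.span S" if "w0 \<in> L N n" for w0 n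
    unfolding delta_span[OF that]
    by (intro fm.span_sum fm.span_scale fm.span_base bvS) (use L_sub in blast)
  have geq: "?g = (\<Sum>n<M. \<Sum>w0\<in>L N n. sc (f w0) (?d w0))"
  proof (rule ext)
    fix w
    have "(\<Sum>n<M. \<Sum>w0\<in>L N n. sc (f w0) (?d w0)) w = (\<Sum>n<M. \<Sum>w0\<in>L N n. f w0 * ?d w0 w)"
      by (simp add: fun_sum_apply sc_def)
    also have "\<dots> = (\<Sum>n<M. if n = length w then (if w \<in> words N then f w else 0) else 0)"
    proof (rule sum.cong[OF refl])
      fix n
      have "(\<Sum>w0\<in>L N n. f w0 * ?d w0 w) = (\<Sum>w0\<in>L N n. if w = w0 then f w else 0)"
        by (rule sum.cong) auto
      also have "\<dots> = (if w \<in> L N n then f w else 0)" by (simp add: sum.delta finite_L)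
      also have "\<dots> = (if n = length w then (if w \<in> words N then f w else 0) else 0)"
        by (auto simp: L_def words_def)
      finally show "(\<Sum>w0\<in>L N n. f w0 * ?d w0 w) = (if n = length w then (if w \<in> words N then f w else 0) else 0)" .
    qed
    also have "\<dots> = (if length w < M then (if w \<in> words N then f w else 0) else 0)"
      by (simp add: sum.delta')
    also have "\<dots> = ?g w" using ell2_vanish[OF f] by auto
    finally show "?g w = (\<Sum>n<M. \<Sum>w0\<in>L N n. sc (f w0) (?d w0)) w" by simp
  qed
  have gcs: "?g \<in> cspan S" unfolding cspan_eq geq
    by (intro fm.span_sum fm.span_scale dS) auto
  have gn: "l2norm (words N) (\<lambda>w. f w - ?g w) < e"
  proof -
    let ?h = "\<lambda>w. if length w < M then 0 else f w"
    have hh: "(\<lambda>w. f w - ?g w) = ?h" by auto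
    have hs: "(\<lambda>w. (cmod (?h w))^2) summable_on words N"
      by (rule summable_on_comparison_test[OF ell2_summ[OF f]]) auto
    let ?t = "infsum (\<lambda>w. (cmod (?h w))^2) (words N)"
    have "((\<lambda>w. (cmod (?h w))^2) has_sum ?t) (words N)" using hs by simp
    hence "((\<lambda>n. \<Sum>w\<in>L N n. (cmod (?h w))^2) has_sum ?t) UNIV" by (rule has_sum_levels)
    moreover have "(\<lambda>n. \<Sum>w\<in>L N n. (cmod (?h w))^2) = (\<lambda>n. if n < M then 0 else ?a n)"
      by (auto simp: L_def intro!: sum.neutral sum.cong)
    ultimately have "((\<lambda>n. if n < M then 0 else ?a n) has_sum ?t) UNIV" by simp
    hence "infsum (\<lambda>n. if n < M then 0 else ?a n) UNIV = ?t" by (rule infsumI)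
    hence "?t < e^2" using M by simp
    hence "sqrt ?t < sqrt (e^2)" by (simp only: real_sqrt_less_iff)
    hence "sqrt ?t < e" using e by simp
    thus ?thesis unfolding hh l2norm_def .
  qed
  show "\<exists>g\<in>cspan S. l2norm (words N) (\<lambda>w. f w - g w) < e"
    by (rule bexI[where P="\<lambda>g. l2norm (words N) (\<lambda>w. f w - g w) < e" and x="?g", OF gn gcs])
qed

end

lemma Idx_gb: "I \<in> Idx N \<Longrightarrow> gb N I \<and> I \<noteq> []"
  by (auto simp: Idx_def gb_def)

lemma gb_Nil: "gb N []" by (simp add: gb_def)


theorem theorem3p16:
  fixes N :: nat and x :: "nat \<Rightarrow> nat \<Rightarrow> complex"
  assumes "N \<ge> 1"
    and orthonormal: "\<forall>i\<in>{1..N}. \<forall>j\<in>{1..N}.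
           (\<Sum>k=1..N. cnj (x i k) * x j k) = (if i = j then 1 else 0)"
    and x1: "\<forall>k\<in>{1..N}. x 1 k = s0 N k"
  shows
    "(\<forall>f\<in>H_Omega N. \<forall>I\<in>Idx N. \<forall>g\<in>H_idx N x I. l2inner (words N) f g = 0)
     \<and> (\<forall>I\<in>Idx N. \<forall>J\<in>Idx N. I \<noteq> J \<longrightarrow>
          (\<forall>f\<in>H_idx N x I. \<forall>g\<in>H_idx N x J. l2inner (words N) f g = 0))
     \<and> closed_span (words N) (H_Omega N \<union> (\<Union>I\<in>Idx N. H_idx N x I)) = ell2 (words N)
     \<and> cyclic_subspace (words N) (lap N) (H_Omega N)
     \<and> (\<forall>I\<in>Idx N. cyclic_subspace (words N) (lap N) (H_idx N x I))
     \<and> unitarily_equivalent (words N) (lap N) (H_Omega N) UNIV (D_Omega N) (ell2 UNIV)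
     \<and> (\<forall>I\<in>Idx N. unitarily_equivalent (words N) (lap N) (H_idx N x I) UNIV (D_op N) (ell2 UNIV))"
proof -
  interpret T: tree N x using assms unfolding tree_def by blast
  have HO: "H_Omega N = H_idx N x []" by (rule H_Omega_eq)
  have bvS: "bv N x j \<in> H_Omega N \<union> (\<Union>I\<in>Idx N. H_idx N x I)" if j: "j \<in> words N" for j
  proof -
    let ?b = "strip j" and ?p = "length j - length (strip j)"
    have g: "gb N ?b" using j by (intro strip_gb) (simp add: words_def)
    have "E N x ?b (dl ?p) = bv N x j" by (simp only: E_dl strip_decomp)
    moreover have "E N x ?b (dl ?p) \<in> H_idx N x ?b" by (rule T.H_E[OF g dl_ell2])
    ultimately have inb: "bv N x j \<in> H_idx N x ?b" by simp
    show ?thesis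
    proof (cases "?b = []")
      case True thus ?thesis using inb HO by simp
    next
      case False
      hence "?b \<in> Idx N" using g by (auto simp: Idx_def gb_def)
      thus ?thesis using inb by blast
    qed
  qed
  have p1: "\<forall>f\<in>H_Omega N. \<forall>I\<in>Idx N. \<forall>g\<in>H_idx N x I. l2inner (words N) f g = 0"
  proof (intro ballI)
    fix f I g assume f: "f \<in> H_Omega N" and I: "I \<in> Idx N" and g: "g \<in> H_idx N x I"
    show "l2inner (words N) f g = 0"
      using T.orth_blocks[OF gb_Nil conjunct1[OF Idx_gb[OF I]] _ f[unfolded HO] g] Idx_gb[OF I] by auto
  qed
  have p2: "\<forall>I\<in>Idx N. \<forall>J\<in>Idx N. I \<noteq> J \<longrightarrow>
          (\<forall>f\<in>H_idx N x I. \<forall>g\<in>H_idx N x J. l2inner (words N) f g = 0)"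
  proof (intro ballI impI)
    fix I J f g assume I: "I \<in> Idx N" and J: "J \<in> Idx N" and ne: "I \<noteq> J"
      and f: "f \<in> H_idx N x I" and g: "g \<in> H_idx N x J"
    show "l2inner (words N) f g = 0"
      by (rule T.orth_blocks[OF conjunct1[OF Idx_gb[OF I]] conjunct1[OF Idx_gb[OF J]] ne f g])
  qed
  have p3: "closed_span (words N) (H_Omega N \<union> (\<Union>I\<in>Idx N. H_idx N x I)) = ell2 (words N)"
  proof
    show "closed_span (words N) (H_Omega N \<union> (\<Union>I\<in>Idx N. H_idx N x I)) \<subseteq> ell2 (words N)"
      by (rule closed_span_sub)
    show "ell2 (words N) \<subseteq> closed_span (words N) (H_Omega N \<union> (\<Union>I\<in>Idx N. H_idx N x I))"
      using T.dense[OF bvS] by blast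
  qed
  have p4: "cyclic_subspace (words N) (lap N) (H_Omega N)"
    unfolding HO by (rule T.cyclic[OF gb_Nil])
  have p5: "\<forall>I\<in>Idx N. cyclic_subspace (words N) (lap N) (H_idx N x I)"
    using T.cyclic Idx_gb by blast
  have p6: "unitarily_equivalent (words N) (lap N) (H_Omega N) UNIV (D_Omega N) (ell2 UNIV)"
    using T.unit_eq[OF gb_Nil] unfolding HO by (simp add: Dg_def)
  have p7: "\<forall>I\<in>Idx N. unitarily_equivalent (words N) (lap N) (H_idx N x I) UNIV (D_op N) (ell2 UNIV)"
  proof
    fix I assume I: "I \<in> Idx N"
    have "Dg N I = D_op N" using Idx_gb[OF I] by (simp add: Dg_def)
    thus "unitarily_equivalent (words N) (lap N) (H_idx N x I) UNIV (D_op N) (ell2 UNIV)"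
      using T.unit_eq[OF conjunct1[OF Idx_gb[OF I]]] by simp
  qed
  show ?thesis using p1 p2 p3 p4 p5 p6 p7 by blast
qed

end
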